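(* Let $\mathbb G$ be a Métivier group as in the context and let $g=(x,t)$ with $x\neq0$. Then $\phi(g;\cdot)$ is strongly concave on $\Omega_*$, i.e. there is $C>0$ such that $\phi(g;s a+(1-s)b)\ge s\phi(g;a)+(1-s)\phi(g;b)+Cs(1-s)|a-b|^2$ for all $0\le s\le1$ and $a,b\in\Omega_*$.
   Context: Let $q,m\ge1$, $U^{(1)},\dots,U^{(m)}$ linearly independent real skew-symmetric $q\times q$ matrices, $U(\tau)=i\sum_j\tau_jU^{(j)}$; the group is of Métivier type if $U(\lambda)$ is invertible for every $\lambda\in\mathbb R^m\setminus\{0\}$. $\Omega_*=\{\tau\in\mathbb R^m:\|U(\tau)\|<\pi\}$, $\phi((x,t);\tau)=\langle U(\tau)\cot U(\tau)x,x\rangle+4t\cdot\tau$ for $(x,t)\in\mathbb R^q\times\mathbb R^m$, $\tau\in\Omega_*$. *)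

theory Defs
  imports "HOL-Analysis.Analysis" "HOL-Computational_Algebra.Formal_Power_Series"
begin

text \<open>Taylor series of z cot z = cos z / (sin z / z) as a formal power series
  (radius of convergence pi).\<close>
definition xcotx_fps :: "real fps" where
  "xcotx_fps = fps_cos 1 * inverse (fps_shift 1 (fps_sin 1))"

primrec mat_pow :: "complex^'n^'n \<Rightarrow> nat \<Rightarrow> complex^'n^'n" where
  "mat_pow M 0 = mat 1"
| "mat_pow M (Suc k) = M ** mat_pow M k"

text \<open>Matrix function M cot M via its power series (converges for operator norm < pi).\<close>
definition mat_xcotx :: "complex^'n^'n \<Rightarrow> complex^'n^'n" where
  "mat_xcotx M = (\<Sum>k. fps_nth xcotx_fps k *\<^sub>R mat_pow M k)"

definition Umat :: "('m::finite \<Rightarrow> real^'q^'q) \<Rightarrow> real^'m \<Rightarrow> complex^'q^'q" where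
  "Umat Us \<tau> = (\<chi> i k. \<i> * complex_of_real (\<Sum>j\<in>UNIV. \<tau>$j * (Us j $ i $ k)))"

definition metivier :: "('m::finite \<Rightarrow> real^'q^'q) \<Rightarrow> bool" where
  "metivier Us \<longleftrightarrow> (\<forall>l::real^'m. l \<noteq> 0 \<longrightarrow> invertible (Umat Us l))"

definition Omega_star :: "('m::finite \<Rightarrow> real^'q^'q) \<Rightarrow> (real^'m) set" where
  "Omega_star Us = {\<tau>. onorm (\<lambda>v. Umat Us \<tau> *v v) < pi}"

text \<open>phi((x,t);tau) = <U cot U x, x> + 4 t.tau  (the bracket is real; we take Re).\<close>
definition phi :: "('m::finite \<Rightarrow> real^'q^'q) \<Rightarrow> real^'q \<Rightarrow> real^'m \<Rightarrow> real^'m \<Rightarrow> real" where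
  "phi Us x t \<tau> = Re (\<Sum>i\<in>UNIV. \<Sum>k\<in>UNIV.
      mat_xcotx (Umat Us \<tau>) $ i $ k * complex_of_real (x$k) * complex_of_real (x$i))
    + 4 * (t \<bullet> \<tau>)"

end

theory Submission
  imports Defs
begin

lemma reflection_deriv_complex:
  fixes w :: complex
  assumes "w \<notin> \<int>"
  shows "sin (of_real pi * w) * (Digamma (1 - w) - Digamma w) = of_real pi * cos (of_real pi * w)"
proof -
  have w1: "w \<notin> \<int>\<^sub>\<le>\<^sub>0" using assms nonpos_Ints_subset_Ints by blast
  have w2: "1 - w \<notin> \<int>\<^sub>\<le>\<^sub>0"
  proof
    assume "1 - w \<in> \<int>\<^sub>\<le>\<^sub>0"
    then have "1 - w \<in> \<int>" using nonpos_Ints_subset_Ints by blast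
    then have "1 - (1 - w) \<in> \<int>" by (intro Ints_diff) auto
    then show False using assms by simp
  qed
  have dr1: "(rGamma has_field_derivative (-rGamma w * Digamma w)) (at w)"
    by (rule has_field_derivative_rGamma_no_nonpos_int[OF w1])
  have dr0: "(rGamma has_field_derivative (-rGamma (1 - w) * Digamma (1 - w))) (at (1 - w))"
    by (rule has_field_derivative_rGamma_no_nonpos_int[OF w2])
  have dl: "((\<lambda>z::complex. 1 - z) has_field_derivative (-1)) (at w)"
    by (auto intro!: derivative_eq_intros)
  have dr2: "((\<lambda>z. rGamma (1 - z)) has_field_derivative (-rGamma (1 - w) * Digamma (1 - w)) * (-1)) (at w)"
    using DERIV_chain2[OF dr0 dl] by simp
  have d1: "((\<lambda>z. rGamma z * rGamma (1 - z)) has_field_derivative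
      ((-rGamma w * Digamma w) * rGamma (1 - w) + rGamma w * ((-rGamma (1 - w) * Digamma (1 - w)) * (-1)))) (at w)"
    using DERIV_mult[OF dr1 dr2] by (simp add: mult_ac)
  have eq: "(\<lambda>z. rGamma z * rGamma (1 - z)) = (\<lambda>z::complex. sin (of_real pi * z) / of_real pi)"
    using rGamma_reflection_complex by blast
  have d2: "((\<lambda>z::complex. sin (of_real pi * z) / of_real pi) has_field_derivative cos (of_real pi * w)) (at w)"
    by (auto intro!: derivative_eq_intros)
  from d1 have "((\<lambda>z::complex. sin (of_real pi * z) / of_real pi) has_field_derivative
      ((-rGamma w * Digamma w) * rGamma (1 - w) + rGamma w * ((-rGamma (1 - w) * Digamma (1 - w)) * (-1)))) (at w)"
    by (simp only: eq)
  from DERIV_unique[OF this d2]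
  have "rGamma w * rGamma (1 - w) * (Digamma (1 - w) - Digamma w) = cos (of_real pi * w)"
    by (simp add: algebra_simps)
  then show ?thesis using rGamma_reflection_complex[of w] by (simp add: field_simps)
qed

lemma reflection_deriv_real:
  fixes w :: real
  assumes "0 < \<bar>w\<bar>" "\<bar>w\<bar> < 1"
  shows "sin (pi * w) * (Digamma (1 - w) - Digamma w) = pi * cos (pi * w)"
proof -
  have "complex_of_real w \<notin> \<int>"
  proof
    assume "complex_of_real w \<in> \<int>"
    then obtain n where n: "complex_of_real w = of_int n" by (auto elim: Ints_cases)
    then have "w = of_int n" by (metis of_real_eq_iff of_real_of_int_eq)
    with assms have "\<bar>real_of_int n\<bar> < 1" "0 < \<bar>real_of_int n\<bar>" by auto
    then have "\<bar>n\<bar> < 1" "0 < \<bar>n\<bar>" by (simp_all only: of_int_abs[symmetric] of_int_less_1_iff of_int_0_less_iff)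
    then show False by linarith
  qed
  from reflection_deriv_complex[OF this]
  have "complex_of_real (sin (pi * w) * (Digamma (1 - w) - Digamma w)) = complex_of_real (pi * cos (pi * w))"
    using assms by (simp add: Polygamma_of_real[symmetric] sin_of_real[symmetric] cos_of_real[symmetric])
  then show ?thesis by (simp only: of_real_eq_iff)
qed

lemma Digamma_diff_series:
  fixes w :: real
  assumes "0 < \<bar>w\<bar>" "\<bar>w\<bar> < 1"
  shows "(\<lambda>k. inverse (1 + w + of_nat k) - inverse (1 - w + of_nat k)) sums (Digamma (1 - w) - Digamma (1 + w))"
proof -
  have s1: "summable (\<lambda>k. inverse (of_nat (Suc k)) - inverse ((1 - w) + of_nat k))"
    by (rule summable_Digamma) (use assms in auto)
  have s2: "summable (\<lambda>k. inverse (of_nat (Suc k)) - inverse ((1 + w) + of_nat k))"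
    by (rule summable_Digamma) (use assms in auto)
  have "(\<lambda>k. (inverse (of_nat (Suc k)) - inverse ((1 - w) + of_nat k)) - (inverse (of_nat (Suc k)) - inverse ((1 + w) + of_nat k)))
      sums ((\<Sum>k. inverse (of_nat (Suc k)) - inverse ((1 - w) + of_nat k)) - (\<Sum>k. inverse (of_nat (Suc k)) - inverse ((1 + w) + of_nat k)))"
    by (intro sums_diff summable_sums s1 s2)
  then show ?thesis by (simp add: Digamma_def)
qed

lemma cot_pfd:
  fixes u :: real
  assumes "0 < \<bar>u\<bar>" "\<bar>u\<bar> < pi"
  shows "(\<lambda>k. 2 * u^2 / ((real (k+1) * pi)^2 - u^2)) sums (1 - u * cot u)"
proof -
  define w where "w = u / pi"
  have w: "0 < \<bar>w\<bar>" "\<bar>w\<bar> < 1" using assms pi_gt_zero by (auto simp: w_def abs_divide field_simps)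
  have u: "u = pi * w" by (simp add: w_def)
  have sinnz: "sin u \<noteq> 0"
  proof
    assume "sin u = 0"
    then obtain n :: int where "u = of_int n * pi" using sin_zero_iff_int2 by blast
    then have e: "\<bar>u\<bar> = \<bar>real_of_int n\<bar> * pi" by (simp add: abs_mult)
    show False
    proof (cases "n = 0")
      case True then show False using e assms by simp
    next
      case False
      then have "1 \<le> \<bar>n\<bar>" by linarith
      then have "1 \<le> \<bar>real_of_int n\<bar>" by (metis of_int_1_le_iff of_int_abs)
      then have "1 * pi \<le> \<bar>real_of_int n\<bar> * pi" using pi_gt_zero by (intro mult_right_mono) auto
      then show False using e assms by simp
    qed
  qed
  have D: "Digamma (1 - w) - Digamma w = 1 / w + (Digamma (1 - w) - Digamma (1 + w))"
    using Digamma_plus1[of w] w by (simp add: add.commute)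
  from reflection_deriv_real[OF w] sinnz
  have "pi * cos u / sin u = Digamma (1 - w) - Digamma w" by (simp add: u field_simps)
  then have "u * cot u = 1 + w * (Digamma (1 - w) - Digamma (1 + w))"
    using w D by (simp add: cot_def u field_simps)
  moreover have "(\<lambda>k. (- w) * (inverse (1 + w + of_nat k) - inverse (1 - w + of_nat k))) sums ((- w) * (Digamma (1 - w) - Digamma (1 + w)))"
    by (intro sums_mult Digamma_diff_series w)
  moreover have "(- w) * (inverse (1 + w + of_nat k) - inverse (1 - w + of_nat k)) = 2 * u^2 / ((real (k+1) * pi)^2 - u^2)" for k
  proof -
    have a: "1 + w + of_nat k > 0" "1 - w + of_nat k > 0" using w by auto
    have b: "(real (k+1) * pi)^2 - u^2 = pi^2 * ((1 + w + of_nat k) * (1 - w + of_nat k))"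
      by (simp add: u power2_eq_square algebra_simps)
    have c: "(- w) * (inverse (1 + w + of_nat k) - inverse (1 - w + of_nat k)) = 2 * w^2 / ((1 + w + of_nat k) * (1 - w + of_nat k))"
      using a by (simp add: field_simps power2_eq_square)
    have "2 * u^2 / ((real (k+1) * pi)^2 - u^2) = (pi^2 * (2 * w^2)) / (pi^2 * ((1 + w + of_nat k) * (1 - w + of_nat k)))"
      by (simp only: b) (simp add: u power_mult_distrib)
    also have "\<dots> = 2 * w^2 / ((1 + w + of_nat k) * (1 - w + of_nat k))"
      using pi_gt_zero by (intro mult_divide_mult_cancel_left) simp
    finally show ?thesis using c by simp
  qed
  ultimately show ?thesis by simp
qed

lemma nonneg_suminf_infsum:
  fixes f :: "nat \<Rightarrow> real"
  assumes "summable f" "\<And>n. 0 \<le> f n"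
  shows "infsum f UNIV = suminf f"
  using sums_nonneg_imp_has_sum[OF summable_sums[OF assms(1)] assms(2)] infsumI by blast

lemma nonneg_swap:
  fixes f :: "nat \<Rightarrow> nat \<Rightarrow> real"
  assumes nn: "\<And>n k. 0 \<le> f n k" and s1: "\<And>n. summable (f n)"
    and s2: "summable (\<lambda>n. suminf (f n))"
  shows "\<And>k. summable (\<lambda>n. f n k)" "summable (\<lambda>k. \<Sum>n. f n k)"
    "(\<Sum>k. \<Sum>n. f n k) = (\<Sum>n. \<Sum>k. f n k)"
proof -
  have hs: "((\<lambda>k. f n k) has_sum suminf (f n)) UNIV" for n
    by (rule sums_nonneg_imp_has_sum[OF summable_sums[OF s1] nn])
  have gs: "(\<lambda>n. suminf (f n)) summable_on UNIV"
    by (rule summable_nonneg_imp_summable_on[OF s2]) (intro suminf_nonneg s1 nn)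
  have S: "(\<lambda>(n, k). f n k) summable_on (UNIV \<times> UNIV)"
    using summable_on_SigmaI[where f="\<lambda>(n, k). f n k" and A=UNIV and B="\<lambda>_. UNIV", OF _ gs] hs nn
    by auto
  have S': "(\<lambda>(k, n). f n k) summable_on (UNIV \<times> UNIV)"
    using iffD1[OF summable_on_swap S] by (simp add: case_prod_unfold)
  have sk: "(\<lambda>n. f n k) summable_on UNIV" for k
    using summable_on_SigmaD1[of "\<lambda>k n. f n k" UNIV "\<lambda>_. UNIV" k] S' by auto
  show sk': "summable (\<lambda>n. f n k)" for k
    using summable_on_UNIV_nonneg_real_iff[of "\<lambda>n. f n k"] nn sk[of k] by simp
  have snn: "0 \<le> (\<Sum>n. f n k)" for k by (rule suminf_nonneg[OF sk']) (rule nn)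
  have "(\<lambda>k. infsum (\<lambda>n. f n k) UNIV) summable_on UNIV"
    by (rule summable_on_Sigma[OF _ S']) (auto intro: sk uniformly_continuous_add)
  moreover have e1: "infsum (\<lambda>n. f n k) UNIV = (\<Sum>n. f n k)" for k
    by (rule nonneg_suminf_infsum[OF sk' nn])
  ultimately have T: "(\<lambda>k. \<Sum>n. f n k) summable_on UNIV" by simp
  show "summable (\<lambda>k. \<Sum>n. f n k)"
    using summable_on_UNIV_nonneg_real_iff[of "\<lambda>k. \<Sum>n. f n k"] snn T by simp
  have e2: "infsum (f n) UNIV = suminf (f n)" for n
    by (rule nonneg_suminf_infsum[OF s1 nn])
  have "infsum (\<lambda>n. infsum (\<lambda>k. f n k) UNIV) UNIV = infsum (\<lambda>k. infsum (\<lambda>n. f n k) UNIV) UNIV"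
    by (rule infsum_swap_banach) (use S in simp)
  also have "\<dots> = infsum (\<lambda>k. \<Sum>n. f n k) UNIV" by (simp add: e1)
  also have "\<dots> = (\<Sum>k. \<Sum>n. f n k)"
    by (rule nonneg_suminf_infsum) (use summable_on_UNIV_nonneg_real_iff[of "\<lambda>k. \<Sum>n. f n k"] snn T in auto)
  finally show "(\<Sum>k. \<Sum>n. f n k) = (\<Sum>n. \<Sum>k. f n k)"
    using e2 nonneg_suminf_infsum[OF s2] suminf_nonneg[OF s1 nn] by (simp add: e2)
qed

lemma fps_expansion_unique_real:
  fixes F G :: "real fps"
  assumes "f has_fps_expansion F" "f has_fps_expansion G"
  shows "F = G"
proof (rule ccontr)
  assume ne: "F \<noteq> G"
  define H where "H = F - G"
  have "(\<lambda>x. f x - f x) has_fps_expansion H"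
    unfolding H_def by (intro has_fps_expansion_diff assms)
  then have H: "fps_conv_radius H > 0" "eventually (\<lambda>x. eval_fps H x = 0) (nhds 0)"
    by (auto simp: has_fps_expansion_def)
  have Hnz: "H \<noteq> 0" using ne by (simp add: H_def)
  define m where "m = subdegree H"
  have hm: "fps_nth H m \<noteq> 0" using Hnz by (simp add: m_def)
  define K where "K = fps_shift m H"
  have rK: "fps_conv_radius K > 0" using H by (simp add: K_def)
  have ev: "eventually (\<lambda>x. x \<in> eball 0 (fps_conv_radius H)) (nhds (0::real))"
    using H by (intro eventually_nhds_in_open) (auto simp: zero_ereal_def)
  have "eventually (\<lambda>x. eval_fps K x = 0) (at (0::real))"
    unfolding K_def
  proof -
    have "eventually (\<lambda>x. x \<noteq> 0 \<longrightarrow> eval_fps (fps_shift m H) x = 0) (nhds (0::real))"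
      using eventually_conj[OF H(2) ev]
      by eventually_elim (auto simp: eval_fps_shift m_def dist_norm)
    then show "eventually (\<lambda>x. eval_fps (fps_shift m H) x = 0) (at (0::real))"
      by (simp add: eventually_at_filter)
  qed
  then have t1: "(eval_fps K \<longlongrightarrow> 0) (at (0::real))"
    by (rule tendsto_eventually)
  have "continuous (at (0::real)) (eval_fps K)"
    using rK by (intro continuous_eval_fps) (simp add: zero_ereal_def)
  then have t2: "(eval_fps K \<longlongrightarrow> eval_fps K 0) (at (0::real))"
    by (simp add: continuous_def)
  from tendsto_unique[OF _ t2 t1] have "eval_fps K 0 = 0" by simp
  moreover have "eval_fps K 0 = fps_nth K 0" by (rule eval_fps_at_0)
  moreover have "fps_nth K 0 = fps_nth H m" unfolding K_def by (simp only: fps_shift_nth add_0)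
  ultimately show False using hm by simp
qed

definition xc :: "real \<Rightarrow> real" where
  "xc u = cos u / (if u = 0 then 1 else sin u / u)"

lemma xcotx_expansion: "xc has_fps_expansion xcotx_fps"
proof -
  have snz: "fps_sin (1::real) \<noteq> 0"
  proof
    assume "fps_sin (1::real) = 0"
    then have "fps_nth (fps_sin (1::real)) 1 = 0" by simp
    then show False by simp
  qed
  have sd: "1 \<le> subdegree (fps_sin (1::real))"
    by (rule subdegree_geI[OF snz]) simp
  have e0: "(\<lambda>x::real. if x = 0 then 1 else sin x / x ^ 1) has_fps_expansion fps_shift 1 (fps_sin 1)"
    by (rule has_fps_expansion_shift[OF has_fps_expansion_sin' sd]) simp
  have e00: "(\<lambda>x::real. if x = 0 then 1 else sin x / x ^ 1) = (\<lambda>x::real. if x = 0 then 1 else sin x / x)"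
    by (intro ext) simp
  have e1: "(\<lambda>x::real. if x = 0 then 1 else sin x / x) has_fps_expansion fps_shift 1 (fps_sin 1)"
    using e0 unfolding e00 .
  have e2: "(\<lambda>x::real. cos x / (if x = 0 then 1 else sin x / x)) has_fps_expansion fps_cos 1 / fps_shift 1 (fps_sin 1)"
    by (rule has_fps_expansion_divide'[OF has_fps_expansion_cos' e1]) simp
  have "fps_cos 1 / fps_shift 1 (fps_sin (1::real)) = xcotx_fps"
    unfolding xcotx_fps_def by (rule fps_divide_unit) simp
  with e2 show ?thesis unfolding xc_def[abs_def] by simp
qed

definition cc :: "nat \<Rightarrow> real" where "cc n = real (n+1) * pi"

definition bcoef :: "nat \<Rightarrow> real" where
  "bcoef k = (if k = 0 then 1 else - (\<Sum>n. (1 + (-1)^k) / cc n ^ k))"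

lemma cc_ge: "pi \<le> cc n" unfolding cc_def using pi_gt_zero by simp

lemma cc_pos: "0 < cc n" using cc_ge[of n] pi_gt_zero by linarith

lemma bterm_nonneg: "0 \<le> (1 + (-1)^k) * (y::real)^k"
proof (cases "even k")
  case True then show ?thesis by (simp add: zero_le_even_power)
next
  case False then show ?thesis by simp
qed

lemma bterm_bound:
  assumes "1 \<le> k"
  shows "(1 + (-1)^k) / cc n ^ k \<le> 2 / pi^k * inverse (real (n+1) ^ 2)"
proof (cases "even k")
  case False then show ?thesis using pi_gt_zero by simp
next
  case True
  then have k2: "2 \<le> k" using assms by presburger
  have "real (n+1) ^ 2 \<le> real (n+1) ^ k" by (rule power_increasing[OF k2]) simp
  then have "pi^k * real (n+1) ^ 2 \<le> pi^k * real (n+1) ^ k" using pi_gt_zero by simp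
  also have "\<dots> = cc n ^ k" by (simp add: cc_def power_mult_distrib)
  finally have le: "pi^k * real (n+1) ^ 2 \<le> cc n ^ k" .
  have pos: "0 < pi^k * real (n+1) ^ 2" using pi_gt_zero by simp
  have "(1 + (-1)^k) / cc n ^ k = 2 / cc n ^ k" using True by simp
  also have "\<dots> \<le> 2 / (pi^k * real (n+1) ^ 2)"
    by (rule divide_left_mono[OF le]) (use pos cc_pos[of n] in auto)
  also have "\<dots> = 2 / pi^k * inverse (real (n+1) ^ 2)" by (simp add: field_simps)
  finally show ?thesis .
qed

lemma summable_Z: "summable (\<lambda>n. inverse (real (n+1) ^ 2))"
proof -
  have "summable (\<lambda>n. inverse (real n ^ 2))" by (rule inverse_power_summable) simp
  then show ?thesis using summable_Suc_iff[of "\<lambda>n. inverse (real n ^ 2)"] by simp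
qed

definition Zc :: real where "Zc = (\<Sum>n. inverse (real (n+1) ^ 2))"

lemma Zc_nonneg: "0 \<le> Zc" unfolding Zc_def by (intro suminf_nonneg summable_Z) simp

lemma bsum_summable:
  assumes "1 \<le> k"
  shows "summable (\<lambda>n. (1 + (-1)^k) / cc n ^ k)"
proof (rule summable_comparison_test')
  show "summable (\<lambda>n. 2 / pi^k * inverse (real (n+1) ^ 2))"
    by (intro summable_mult summable_Z)
  show "norm ((1 + (-1)^k) / cc n ^ k) \<le> 2 / pi^k * inverse (real (n+1) ^ 2)" for n
  proof -
    have "0 \<le> (1 + (-1)^k) / cc n ^ k"
      using bterm_nonneg[of k "inverse (cc n)"] by (simp add: power_inverse divide_inverse)
    then show ?thesis using bterm_bound[OF assms, of n] by simp
  qed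
qed

lemma bcoef_bound: "\<bar>bcoef k\<bar> \<le> (1 + 2 * Zc) / pi^k"
proof (cases "k = 0")
  case True then show ?thesis using Zc_nonneg by (simp add: bcoef_def)
next
  case False
  then have k: "1 \<le> k" by simp
  have nn: "0 \<le> (1 + (-1)^k) / cc n ^ k" for n
    using bterm_nonneg[of k "inverse (cc n)"] by (simp add: power_inverse divide_inverse)
  have "\<bar>bcoef k\<bar> = (\<Sum>n. (1 + (-1)^k) / cc n ^ k)"
    using False suminf_nonneg[OF bsum_summable[OF k] nn] by (simp add: bcoef_def)
  also have "\<dots> \<le> (\<Sum>n. 2 / pi^k * inverse (real (n+1) ^ 2))"
    by (intro suminf_le bsum_summable[OF k] summable_mult summable_Z bterm_bound[OF k])
  also have "\<dots> = 2 / pi^k * Zc" unfolding Zc_def by (intro suminf_mult summable_Z)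
  also have "\<dots> \<le> (1 + 2 * Zc) / pi^k" using pi_gt_zero by (simp add: field_simps)
  finally show ?thesis .
qed

lemma bcoef_abs_summable:
  assumes "0 \<le> r" "r < pi"
  shows "summable (\<lambda>k. \<bar>bcoef k\<bar> * r^k)"
proof (rule summable_comparison_test')
  show "summable (\<lambda>k. (1 + 2 * Zc) * (r / pi)^k)"
    using assms pi_gt_zero by (intro summable_mult summable_geometric) simp
  show "norm (\<bar>bcoef k\<bar> * r^k) \<le> (1 + 2 * Zc) * (r / pi)^k" for k
  proof -
    have "\<bar>bcoef k\<bar> * r^k \<le> (1 + 2 * Zc) / pi^k * r^k"
      using assms by (intro mult_right_mono bcoef_bound) simp
    then show ?thesis using assms by (simp add: power_divide)
  qed
qed

lemma eterm_sums:
  fixes u :: real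
  assumes "\<bar>u\<bar> < pi"
  shows "(\<lambda>k. (1 + (-1)^k) * (u / cc n)^k - (if k = 0 then 2 else 0)) sums (2 * u^2 / (cc n ^ 2 - u^2))"
proof -
  define \<rho> where "\<rho> = u / cc n"
  have c: "0 < cc n" "pi \<le> cc n" using cc_pos cc_ge by auto
  have r: "norm \<rho> < 1" using assms c by (simp add: \<rho>_def abs_divide field_simps)
  have r2: "norm (-\<rho>) < 1" using r by simp
  have "(\<lambda>k. \<rho>^k + (-\<rho>)^k - (if k = 0 then 2 else 0)) sums (1 / (1 - \<rho>) + 1 / (1 - (-\<rho>)) - 2)"
    by (intro sums_diff sums_add geometric_sums r r2) (rule sums_single[of 0 "\<lambda>_. 2::real", simplified])
  moreover have "\<rho>^k + (-\<rho>)^k = (1 + (-1)^k) * \<rho>^k" for k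
    by (simp add: power_minus[of \<rho>] algebra_simps)
  moreover have "1 / (1 - \<rho>) + 1 / (1 - (-\<rho>)) - 2 = 2 * u^2 / (cc n ^ 2 - u^2)"
  proof -
    have a: "1 - \<rho> \<noteq> 0" "1 + \<rho> \<noteq> 0" using r by auto
    have a3: "1 - \<rho> * \<rho> \<noteq> 0"
    proof -
      have "1 - \<rho> * \<rho> = (1 - \<rho>) * (1 + \<rho>)" by algebra
      then show ?thesis using a by simp
    qed
    have b: "cc n ^ 2 - u^2 \<noteq> 0"
    proof
      assume "cc n ^ 2 - u^2 = 0"
      then have "\<bar>u\<bar> = cc n" using c by (metis abs_of_pos power2_eq_iff_nonneg abs_ge_zero eq_iff_diff_eq_0 power2_abs less_imp_le)
      then show False using assms c by simp
    qed
    have "1 / (1 - \<rho>) + 1 / (1 - (-\<rho>)) - 2 = 2 * \<rho>^2 / (1 - \<rho>^2)"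
      using a a3 by (simp add: field_simps power2_eq_square)
    also have "\<dots> = 2 * u^2 / (cc n ^ 2 - u^2)"
      using c b by (simp add: \<rho>_def field_simps power2_eq_square)
    finally show ?thesis .
  qed
  ultimately show ?thesis unfolding \<rho>_def by simp
qed

lemma eterm_nonneg: "0 \<le> (1 + (-1)^k) * (y::real)^k - (if k = 0 then 2 else 0)"
  using bterm_nonneg[of k y] by auto

lemma B_sums:
  fixes u :: real
  assumes "\<bar>u\<bar> < pi"
  shows "(\<lambda>k. bcoef k * u^k) sums xc u"
proof (cases "u = 0")
  case True
  then show ?thesis using powser_sums_zero[of bcoef] by (simp add: bcoef_def xc_def)
next
  case False
  define e where "e n k = (1 + (-1)^k) * (u / cc n)^k - (if k = 0 then 2 else (0::real))" for n k
  have enn: "0 \<le> e n k" for n k unfolding e_def by (rule eterm_nonneg)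
  have es: "e n sums (2 * u^2 / (cc n ^ 2 - u^2))" for n
    unfolding e_def[abs_def] by (rule eterm_sums[OF assms])
  have pfd: "(\<lambda>n. 2 * u^2 / (cc n ^ 2 - u^2)) sums (1 - u * cot u)"
    using cot_pfd[of u] False assms by (simp add: cc_def)
  have s1: "summable (e n)" for n using es sums_summable by blast
  have s2: "summable (\<lambda>n. suminf (e n))" using es pfd by (simp add: sums_iff)
  note sw = nonneg_swap[of e, OF enn s1 s2]
  have tot: "(\<Sum>n. suminf (e n)) = 1 - u * cot u" using es pfd by (simp add: sums_iff)
  have col: "(\<Sum>n. e n k) = (if k = 0 then 0 else - bcoef k * u^k)" for k
  proof (cases "k = 0")
    case True then show ?thesis by (simp add: e_def)
  next
    case False
    then have k: "1 \<le> k" by simp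
    have "e n k = (1 + (-1)^k) / cc n ^ k * u^k" for n
      using False by (simp add: e_def power_divide)
    then have "(\<Sum>n. e n k) = (\<Sum>n. (1 + (-1)^k) / cc n ^ k) * u^k"
      by (simp add: suminf_mult2[OF bsum_summable[OF k]])
    then show ?thesis using False by (simp add: bcoef_def)
  qed
  have "(\<lambda>k. (if k = 0 then 1 else 0) - (\<Sum>n. e n k)) sums (1 - (1 - u * cot u))"
  proof (intro sums_diff)
    show "(\<lambda>k. if k = 0 then 1 else 0::real) sums 1" using sums_single[of 0 "\<lambda>_. 1::real"] by simp
    show "(\<lambda>k. \<Sum>n. e n k) sums (1 - u * cot u)"
      using summable_sums[OF sw(2)] sw(3) tot by simp
  qed
  moreover have "(if k = 0 then 1 else 0) - (\<Sum>n. e n k) = bcoef k * u^k" for k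
    using col[of k] by (simp add: bcoef_def)
  moreover have "1 - (1 - u * cot u) = xc u"
    using False by (simp add: xc_def cot_def)
  ultimately show ?thesis by simp
qed

lemma B_expansion: "xc has_fps_expansion Abs_fps bcoef"
proof (rule has_fps_expansionI)
  have "eventually (\<lambda>u. u \<in> ball (0::real) pi) (nhds 0)"
    using pi_gt_zero by (intro eventually_nhds_in_open) auto
  then show "eventually (\<lambda>u. (\<lambda>n. fps_nth (Abs_fps bcoef) n * u ^ n) sums xc u) (nhds 0)"
    by eventually_elim (auto intro!: B_sums)
qed

lemma xcotx_coeff: "fps_nth xcotx_fps k = bcoef k"
proof -
  have "xcotx_fps = Abs_fps bcoef" by (rule fps_expansion_unique_real[OF xcotx_expansion B_expansion])
  then show ?thesis by (metis fps_nth_Abs_fps)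
qed

lemma funpow_norm_bound:
  fixes A :: "'v::real_normed_vector \<Rightarrow> 'v"
  assumes bd: "\<And>v. norm (A v) \<le> r * norm v" and r: "0 \<le> r"
  shows "norm ((A ^^ k) v) \<le> r ^ k * norm v"
proof (induction k)
  case 0 then show ?case by simp
next
  case (Suc k)
  have "norm ((A ^^ Suc k) v) = norm (A ((A ^^ k) v))" by simp
  also have "\<dots> \<le> r * norm ((A ^^ k) v)" by (rule bd)
  also have "\<dots> \<le> r * (r ^ k * norm v)" using Suc r by (intro mult_left_mono) auto
  finally show ?case by simp
qed

definition res :: "('v::real_normed_vector \<Rightarrow> 'v) \<Rightarrow> real \<Rightarrow> 'v \<Rightarrow> 'v" where
  "res A c x = (\<Sum>k. (inverse c ^ Suc k) *\<^sub>R (A ^^ k) x)"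

lemma res_props:
  fixes A :: "'v::{real_inner,banach} \<Rightarrow> 'v"
  assumes lin: "bounded_linear A" and bd: "\<And>v. norm (A v) \<le> r * norm v"
    and r: "0 \<le> r" "r < c"
  shows "(\<lambda>k. (inverse c ^ Suc k) *\<^sub>R (A ^^ k) x) sums res A c x"
    and "c *\<^sub>R res A c x - A (res A c x) = x"
    and "(\<lambda>k. inverse c ^ Suc k * inner ((A ^^ k) x) w) sums inner (res A c x) w"
proof -
  have c: "0 < c" using r by linarith
  have q: "0 \<le> r / c" "r / c < 1" using r c by (auto simp: field_simps)
  have nb: "norm ((inverse c ^ k) *\<^sub>R (A ^^ k) x) \<le> (r / c) ^ k * norm x" for k
  proof -
    have "norm ((inverse c ^ k) *\<^sub>R (A ^^ k) x) = inverse c ^ k * norm ((A ^^ k) x)"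
      using c by simp
    also have "\<dots> \<le> inverse c ^ k * (r ^ k * norm x)"
      using funpow_norm_bound[OF bd r(1)] c by (intro mult_left_mono) auto
    also have "\<dots> = (r / c) ^ k * norm x" by (simp add: power_divide field_simps)
    finally show ?thesis .
  qed
  have sb: "summable (\<lambda>k. (inverse c ^ k) *\<^sub>R (A ^^ k) x)"
    by (rule summable_comparison_test'[OF summable_mult2[OF summable_geometric]])
       (use q nb in auto)
  have sb1: "summable (\<lambda>k. (inverse c ^ Suc k) *\<^sub>R (A ^^ k) x)"
    using summable_scaleR_right[OF sb, of "inverse c"] by (simp add: scaleR_scaleR mult.commute)
  show S: "(\<lambda>k. (inverse c ^ Suc k) *\<^sub>R (A ^^ k) x) sums res A c x"
    unfolding res_def using sb1 by (rule summable_sums)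
  define b where "b k = (inverse c ^ k) *\<^sub>R (A ^^ k) x" for k
  have s1: "(\<lambda>k. b k) sums (c *\<^sub>R res A c x)"
  proof -
    have e: "c * (inverse c * y) = y" for y :: real using c by (simp add: mult.assoc[symmetric])
    have "(\<lambda>k. c *\<^sub>R ((inverse c ^ Suc k) *\<^sub>R (A ^^ k) x)) sums (c *\<^sub>R res A c x)"
      by (rule sums_scaleR_right[OF S])
    then show ?thesis by (simp add: b_def e)
  qed
  have s2: "(\<lambda>k. b (Suc k)) sums (A (res A c x))"
    using bounded_linear.sums[OF lin S] by (simp add: b_def lin[THEN bounded_linear.linear, THEN linear_cmul])
  have lim: "b \<longlonglongrightarrow> 0"
  proof (rule Lim_null_comparison)
    show "eventually (\<lambda>k. norm (b k) \<le> (r / c) ^ k * norm x) sequentially"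
      using nb by (simp add: b_def)
    show "(\<lambda>k. (r / c) ^ k * norm x) \<longlonglongrightarrow> 0"
      using q by (intro tendsto_mult_left_zero LIMSEQ_power_zero) auto
  qed
  have "(\<lambda>k. b k - b (Suc k)) sums (b 0 - 0)" by (rule telescope_sums'[OF lim])
  moreover have "(\<lambda>k. b k - b (Suc k)) sums (c *\<^sub>R res A c x - A (res A c x))"
    by (rule sums_diff[OF s1 s2])
  ultimately show "c *\<^sub>R res A c x - A (res A c x) = x"
    using sums_unique2 by (fastforce simp: b_def)
  show "(\<lambda>k. inverse c ^ Suc k * inner ((A ^^ k) x) w) sums inner (res A c x) w"
    using bounded_linear.sums[OF bounded_linear_inner_left S, of w] by simp
qed

lemma pos_bound:
  fixes A :: "'v::real_inner \<Rightarrow> 'v"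
  assumes bd: "norm (A d) \<le> c * norm d" and c: "0 < c"
  shows "norm (c *\<^sub>R d - A d)^2 / (2 * c) \<le> inner (c *\<^sub>R d - A d) d"
proof -
  have n1: "norm (c *\<^sub>R d - A d)^2 = c^2 * norm d ^2 - 2 * c * inner (A d) d + norm (A d)^2"
    unfolding power2_norm_eq_inner by (simp add: inner_diff_left inner_diff_right inner_commute power2_eq_square algebra_simps)
  have i1: "inner (c *\<^sub>R d - A d) d = c * norm d ^2 - inner (A d) d"
    by (simp add: power2_norm_eq_inner inner_diff_left)
  have "norm (A d)^2 \<le> (c * norm d)^2" using bd by (intro power_mono) auto
  then have "norm (c *\<^sub>R d - A d)^2 \<le> 2 * c * inner (c *\<^sub>R d - A d) d"
    unfolding n1 i1 by (simp add: power2_eq_square algebra_simps)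
  then show ?thesis using c by (simp add: field_simps)
qed

lemma gap_lemma:
  fixes Aa Ab :: "'v::real_inner \<Rightarrow> 'v" and s c :: real
  assumes la: "linear Aa" and lb: "linear Ab"
    and sa: "\<And>v w. inner (Aa v) w = inner v (Aa w)"
    and sb: "\<And>v w. inner (Ab v) w = inner v (Ab w)"
    and bda: "\<And>v. norm (Aa v) \<le> c * norm v" and bdb: "\<And>v. norm (Ab v) \<le> c * norm v"
    and c: "0 < c" and s: "0 \<le> s" "s \<le> 1"
    and ya: "c *\<^sub>R ya - Aa ya = x" and yb: "c *\<^sub>R yb - Ab yb = x"
    and y: "c *\<^sub>R y - (s *\<^sub>R Aa y + (1 - s) *\<^sub>R Ab y) = x"
  shows "s * (1 - s) * norm (Aa y - Ab y)^2 / (2 * c) \<le> s * inner ya x + (1 - s) * inner yb x - inner y x"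
proof -
  define D where "D = Aa y - Ab y"
  define da where "da = y - ya"
  define db where "db = y - yb"
  have ea: "c *\<^sub>R da - Aa da = (- (1 - s)) *\<^sub>R D"
  proof -
    have "c *\<^sub>R da - Aa da = (c *\<^sub>R y - Aa y) - (c *\<^sub>R ya - Aa ya)"
      by (simp add: da_def linear_diff[OF la] algebra_simps)
    also have "\<dots> = (c *\<^sub>R y - Aa y) - (c *\<^sub>R y - (s *\<^sub>R Aa y + (1 - s) *\<^sub>R Ab y))"
      using ya y by simp
    also have "\<dots> = (- (1 - s)) *\<^sub>R D" by (simp add: D_def algebra_simps)
    finally show ?thesis .
  qed
  have eb: "c *\<^sub>R db - Ab db = s *\<^sub>R D"
  proof -
    have "c *\<^sub>R db - Ab db = (c *\<^sub>R y - Ab y) - (c *\<^sub>R yb - Ab yb)"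
      by (simp add: db_def linear_diff[OF lb] algebra_simps)
    also have "\<dots> = (c *\<^sub>R y - Ab y) - (c *\<^sub>R y - (s *\<^sub>R Aa y + (1 - s) *\<^sub>R Ab y))"
      using yb y by simp
    also have "\<dots> = s *\<^sub>R D" by (simp add: D_def algebra_simps)
    finally show ?thesis .
  qed
  have ia: "inner (c *\<^sub>R da - Aa da) da = inner (c *\<^sub>R y - Aa y) y - 2 * inner y x + inner ya x"
  proof -
    have "inner (c *\<^sub>R da - Aa da) da = inner ((c *\<^sub>R y - Aa y) - (c *\<^sub>R ya - Aa ya)) (y - ya)"
      by (simp add: da_def linear_diff[OF la] algebra_simps)
    also have "\<dots> = inner (c *\<^sub>R y - Aa y) y - inner (c *\<^sub>R y - Aa y) ya - inner x y + inner x ya"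
      using ya by (simp add: inner_diff_left inner_diff_right)
    also have "inner (c *\<^sub>R y - Aa y) ya = inner y x"
    proof -
      have "inner (c *\<^sub>R y - Aa y) ya = c * inner y ya - inner (Aa y) ya" by (simp add: inner_diff_left)
      also have "inner (Aa y) ya = inner y (Aa ya)" by (rule sa)
      also have "c * inner y ya - inner y (Aa ya) = inner y (c *\<^sub>R ya - Aa ya)" by (simp add: inner_diff_right)
      finally show ?thesis using ya by simp
    qed
    finally show ?thesis by (simp add: inner_commute)
  qed
  have ib: "inner (c *\<^sub>R db - Ab db) db = inner (c *\<^sub>R y - Ab y) y - 2 * inner y x + inner yb x"
  proof -
    have "inner (c *\<^sub>R db - Ab db) db = inner ((c *\<^sub>R y - Ab y) - (c *\<^sub>R yb - Ab yb)) (y - yb)"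
      by (simp add: db_def linear_diff[OF lb] algebra_simps)
    also have "\<dots> = inner (c *\<^sub>R y - Ab y) y - inner (c *\<^sub>R y - Ab y) yb - inner x y + inner x yb"
      using yb by (simp add: inner_diff_left inner_diff_right)
    also have "inner (c *\<^sub>R y - Ab y) yb = inner y x"
    proof -
      have "inner (c *\<^sub>R y - Ab y) yb = c * inner y yb - inner (Ab y) yb" by (simp add: inner_diff_left)
      also have "inner (Ab y) yb = inner y (Ab yb)" by (rule sb)
      also have "c * inner y yb - inner y (Ab yb) = inner y (c *\<^sub>R yb - Ab yb)" by (simp add: inner_diff_right)
      finally show ?thesis using yb by simp
    qed
    finally show ?thesis by (simp add: inner_commute)
  qed
  have im: "s * inner (c *\<^sub>R y - Aa y) y + (1 - s) * inner (c *\<^sub>R y - Ab y) y = inner x y"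
  proof -
    have "s * inner (c *\<^sub>R y - Aa y) y + (1 - s) * inner (c *\<^sub>R y - Ab y) y
        = inner (c *\<^sub>R y - (s *\<^sub>R Aa y + (1 - s) *\<^sub>R Ab y)) y"
      by (simp add: inner_diff_left inner_add_left algebra_simps)
    then show ?thesis using y by simp
  qed
  have key: "s * inner (c *\<^sub>R da - Aa da) da + (1 - s) * inner (c *\<^sub>R db - Ab db) db
      = s * inner ya x + (1 - s) * inner yb x - inner y x"
    unfolding ia ib using im by (simp add: inner_commute algebra_simps)
  have pa: "norm ((- (1 - s)) *\<^sub>R D)^2 / (2 * c) \<le> inner (c *\<^sub>R da - Aa da) da"
    using pos_bound[where A=Aa and d=da, OF bda[of da] c] ea by simp
  have pb: "norm (s *\<^sub>R D)^2 / (2 * c) \<le> inner (c *\<^sub>R db - Ab db) db"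
    using pos_bound[where A=Ab and d=db, OF bdb[of db] c] eb by simp
  have "s * (1 - s) * norm D ^2 / (2 * c) = s * (norm ((- (1 - s)) *\<^sub>R D)^2 / (2 * c)) + (1 - s) * (norm (s *\<^sub>R D)^2 / (2 * c))"
  proof -
    have n1: "norm ((- (1 - s)) *\<^sub>R D) = (1 - s) * norm D" using s by simp
    have n2: "norm (s *\<^sub>R D) = s * norm D" using s by simp
    show ?thesis unfolding n1 n2 using c by (simp add: field_simps power2_eq_square)
  qed
  also have "\<dots> \<le> s * inner (c *\<^sub>R da - Aa da) da + (1 - s) * inner (c *\<^sub>R db - Ab db) db"
    using s by (intro add_mono mult_left_mono pa pb) auto
  finally show ?thesis unfolding key D_def .
qed

lemma Umat_mv:
  "(Umat Us \<tau> *v v) $ i = (\<Sum>k\<in>UNIV. \<i> * complex_of_real (\<Sum>j\<in>UNIV. \<tau>$j * (Us j $ i $ k)) * v $ k)"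
  by (simp add: Umat_def matrix_vector_mult_def)

lemma vscale_comp: "((s::real) *\<^sub>R (w::complex^'n)) $ i = complex_of_real s * w $ i"
  unfolding vector_scaleR_component by (rule scaleR_conv_of_real)

lemma cscale: "(s::real) *\<^sub>R (z::complex) = complex_of_real s * z"
  by (rule scaleR_conv_of_real)

lemma Umat_lin:
  "Umat Us (s *\<^sub>R a + r *\<^sub>R b) *v v = s *\<^sub>R (Umat Us a *v v) + r *\<^sub>R (Umat Us b *v v)"
  by (simp add: vec_eq_iff Umat_mv vscale_comp cscale sum_distrib_left sum.distrib[symmetric] algebra_simps)

lemma Umat_diff:
  "Umat Us (a - b) *v v = (Umat Us a *v v) - (Umat Us b *v v)"
  using Umat_lin[of Us 1 a "-1" b v] by (simp add: algebra_simps)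

lemma Umat_scale:
  "Umat Us (s *\<^sub>R a) *v v = s *\<^sub>R (Umat Us a *v v)"
  using Umat_lin[of Us s a 0 0 v] by simp

lemma Umat_vscale:
  "Umat Us a *v (s *\<^sub>R v) = s *\<^sub>R (Umat Us a *v v)"
  by (simp add: vec_eq_iff Umat_mv vscale_comp cscale sum_distrib_left algebra_simps)

lemma Umat_linear: "linear (\<lambda>v. Umat Us a *v v)"
  using matrix_vector_mul_bounded_linear[of "Umat Us a"] bounded_linear.linear by blast

lemma inner_Umat_formula:
  "inner (Umat Us \<tau> *v v) w = (\<Sum>i\<in>UNIV. \<Sum>k\<in>UNIV. (\<Sum>j\<in>UNIV. \<tau>$j * (Us j $ i $ k)) * (Re (v$k) * Im (w$i) - Im (v$k) * Re (w$i)))"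
proof -
  define S where "S i k = (\<Sum>j\<in>UNIV. \<tau>$j * (Us j $ i $ k))" for i k
  have c: "(Umat Us \<tau> *v v) $ i = (\<Sum>k\<in>UNIV. \<i> * complex_of_real (S i k) * v $ k)" for i
    by (simp add: Umat_mv S_def)
  have "inner (Umat Us \<tau> *v v) w = (\<Sum>i\<in>UNIV. inner ((Umat Us \<tau> *v v) $ i) (w $ i))"
    by (simp add: inner_vec_def)
  also have "\<dots> = (\<Sum>i\<in>UNIV. \<Sum>k\<in>UNIV. S i k * (Re (v$k) * Im (w$i) - Im (v$k) * Re (w$i)))"
  proof (intro sum.cong refl)
    fix i
    show "inner ((Umat Us \<tau> *v v) $ i) (w $ i) = (\<Sum>k\<in>UNIV. S i k * (Re (v$k) * Im (w$i) - Im (v$k) * Re (w$i)))"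
    proof -
      have "inner ((Umat Us \<tau> *v v) $ i) (w $ i) = Re (w$i) * (\<Sum>k\<in>UNIV. -(S i k * Im (v$k))) + Im (w$i) * (\<Sum>k\<in>UNIV. S i k * Re (v$k))"
        unfolding c inner_complex_def by (simp add: Re_sum Im_sum mult.commute)
      also have "\<dots> = (\<Sum>k\<in>UNIV. Re (w$i) * (-(S i k * Im (v$k))) + Im (w$i) * (S i k * Re (v$k)))"
        by (simp only: sum_distrib_left sum.distrib)
      also have "\<dots> = (\<Sum>k\<in>UNIV. S i k * (Re (v$k) * Im (w$i) - Im (v$k) * Re (w$i)))"
        by (intro sum.cong refl) (simp add: algebra_simps)
      finally show ?thesis .
    qed
  qed
  finally show ?thesis by (simp add: S_def)
qed

lemma Umat_selfadj:
  assumes skew: "\<And>j. transpose (Us j) = - Us j"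
  shows "inner (Umat Us \<tau> *v v) w = inner v (Umat Us \<tau> *v w)"
proof -
  define S where "S i k = (\<Sum>j\<in>UNIV. \<tau>$j * (Us j $ i $ k))" for i k
  have Sk: "S k i = - S i k" for i k
  proof -
    have "Us j $ k $ i = - (Us j $ i $ k)" for j
      using arg_cong[OF skew[of j], of "\<lambda>M. M $ i $ k"] by (simp add: transpose_def)
    then show ?thesis by (simp add: S_def sum_negf[symmetric])
  qed
  have "inner v (Umat Us \<tau> *v w) = inner (Umat Us \<tau> *v w) v" by (rule inner_commute)
  also have "\<dots> = (\<Sum>i\<in>UNIV. \<Sum>k\<in>UNIV. S i k * (Re (w$k) * Im (v$i) - Im (w$k) * Re (v$i)))"
    unfolding inner_Umat_formula S_def ..
  also have "\<dots> = (\<Sum>k\<in>UNIV. \<Sum>i\<in>UNIV. S i k * (Re (w$k) * Im (v$i) - Im (w$k) * Re (v$i)))"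
    by (rule sum.swap)
  also have "\<dots> = (\<Sum>k\<in>UNIV. \<Sum>i\<in>UNIV. S k i * (Re (v$i) * Im (w$k) - Im (v$i) * Re (w$k)))"
    by (intro sum.cong refl, subst Sk, simp add: algebra_simps)
  also have "\<dots> = inner (Umat Us \<tau> *v v) w"
    unfolding inner_Umat_formula S_def ..
  finally show ?thesis ..
qed

lemma Umat_cont: "continuous_on UNIV (\<lambda>p::(real^'m) \<times> (complex^'q). norm (Umat Us (fst p) *v snd p))"
  unfolding matrix_vector_mult_def Umat_def
  by (intro continuous_intros)

lemma sigma_exists:
  fixes Us :: "'m::finite \<Rightarrow> real^'q::finite^'q"
  assumes met: "metivier Us"
  shows "\<exists>\<sigma>>0. \<forall>h v. \<sigma> * norm h * norm v \<le> norm (Umat Us h *v (v::complex^'q))"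
proof -
  define K where "K = sphere (0::real^'m) 1 \<times> sphere (0::complex^'q) 1"
  have cK: "compact K" unfolding K_def by (intro compact_Times compact_sphere)
  have neK: "K \<noteq> {}" unfolding K_def by (auto simp: sphere_eq_empty)
  obtain p0 where p0: "p0 \<in> K" and mn: "\<And>p. p \<in> K \<Longrightarrow> norm (Umat Us (fst p0) *v snd p0) \<le> norm (Umat Us (fst p) *v snd p)"
    using continuous_attains_inf[OF cK neK continuous_on_subset[OF Umat_cont subset_UNIV]] by blast
  define \<sigma> where "\<sigma> = norm (Umat Us (fst p0) *v snd p0)"
  have pos: "\<sigma> > 0"
  proof -
    have h0: "fst p0 \<noteq> 0" and v0: "snd p0 \<noteq> 0" using p0 by (auto simp: K_def)
    from met h0 have "invertible (Umat Us (fst p0))" by (simp add: metivier_def)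
    then obtain B where B: "B ** Umat Us (fst p0) = mat 1" by (auto simp: invertible_def)
    have "Umat Us (fst p0) *v snd p0 \<noteq> 0"
    proof
      assume "Umat Us (fst p0) *v snd p0 = 0"
      then have "B *v (Umat Us (fst p0) *v snd p0) = 0" by simp
      then have "snd p0 = 0" by (simp add: matrix_vector_mul_assoc B)
      with v0 show False by simp
    qed
    then show ?thesis by (simp add: \<sigma>_def)
  qed
  have "\<sigma> * norm h * norm v \<le> norm (Umat Us h *v v)" for h v
  proof (cases "h = 0 \<or> v = 0")
    case True then show ?thesis using pos by auto
  next
    case False
    then have hn: "norm h > 0" and vn: "norm v > 0" by auto
    define h1 where "h1 = inverse (norm h) *\<^sub>R h"
    define v1 where "v1 = inverse (norm v) *\<^sub>R v"
    have "(h1, v1) \<in> K" using hn vn by (simp add: K_def h1_def v1_def)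
    from mn[OF this] have "\<sigma> \<le> norm (Umat Us h1 *v v1)" by (simp add: \<sigma>_def)
    also have "Umat Us h1 *v v1 = (inverse (norm h) * inverse (norm v)) *\<^sub>R (Umat Us h *v v)"
      by (simp add: h1_def v1_def Umat_scale Umat_vscale)
    also have "norm \<dots> = norm (Umat Us h *v v) / (norm h * norm v)"
      using hn vn by (simp add: field_simps)
    finally show ?thesis using hn vn by (simp add: field_simps)
  qed
  then show ?thesis using pos by blast
qed

definition cvec :: "real^'q \<Rightarrow> complex^'q" where
  "cvec x = (\<chi> i. complex_of_real (x$i))"

definition qf :: "real^'q \<Rightarrow> complex^'q^'q \<Rightarrow> real" where
  "qf x M = Re (\<Sum>i\<in>UNIV. \<Sum>k\<in>UNIV. M $ i $ k * complex_of_real (x$k) * complex_of_real (x$i))"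

lemma mat_pow_mv: "mat_pow M k *v v = ((\<lambda>v. M *v v) ^^ k) v"
  by (induction k) (simp_all add: matrix_vector_mul_assoc[symmetric])

lemma qf_inner: "qf x M = inner (M *v cvec x) (cvec x)"
  by (simp add: qf_def inner_vec_def cvec_def matrix_vector_mult_def inner_complex_def Re_sum
      sum_distrib_right mult.assoc)

lemma qf_linear: "linear (qf x)"
proof (rule linearI)
  show "qf x (M + N) = qf x M + qf x N" for M N
    by (simp add: qf_def sum.distrib distrib_right)
  show "qf x (r *\<^sub>R M) = r *\<^sub>R qf x M" for r M
    by (simp add: qf_def cscale sum_distrib_left mult.assoc)
qed

lemma qf_bl: "bounded_linear (qf x)"
  using qf_linear linear_conv_bounded_linear by blast

lemma vec_norm_le_sum: "norm (v::('a::real_normed_vector)^'n) \<le> (\<Sum>i\<in>UNIV. norm (v$i))"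
  by (simp add: norm_vec_def L2_set_le_sum)

lemma mv_axis: "(A *v axis j (1::complex)) $ i = A $ i $ j"
  by (simp add: matrix_vector_mult_def axis_def if_distrib cong: if_cong)

lemma caxis_norm: "norm (axis j (1::complex)) = 1"
proof -
  have "(\<Sum>i\<in>UNIV. (norm (axis j (1::complex) $ i))^2) = (\<Sum>i\<in>UNIV. if i = j then 1 else 0)"
    by (intro sum.cong refl) (simp add: axis_def)
  then show ?thesis by (simp add: norm_vec_def L2_set_def)
qed

lemma mat_pow_norm:
  fixes U :: "complex^'q^'q"
  assumes bd: "\<And>v. norm (U *v v) \<le> r * norm v" and r: "0 \<le> r"
  shows "norm (mat_pow U k) \<le> real (CARD('q) * CARD('q)) * r^k"
proof -
  have e: "norm (mat_pow U k $ i $ j) \<le> r^k" for i j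
  proof -
    have "norm (mat_pow U k $ i $ j) = norm ((mat_pow U k *v axis j 1) $ i)" by (simp add: mv_axis)
    also have "\<dots> \<le> norm (mat_pow U k *v axis j 1)" by (rule Finite_Cartesian_Product.norm_nth_le)
    also have "\<dots> = norm (((\<lambda>v. U *v v) ^^ k) (axis j 1))" by (simp add: mat_pow_mv)
    also have "\<dots> \<le> r^k * norm (axis j (1::complex))" by (rule funpow_norm_bound[OF bd r])
    finally show ?thesis by (simp add: caxis_norm)
  qed
  have "norm (mat_pow U k) \<le> (\<Sum>i\<in>UNIV. norm (mat_pow U k $ i))" by (rule vec_norm_le_sum)
  also have "\<dots> \<le> (\<Sum>i\<in>UNIV. \<Sum>j\<in>UNIV. norm (mat_pow U k $ i $ j))"
    by (intro sum_mono vec_norm_le_sum)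
  also have "\<dots> \<le> (\<Sum>i\<in>(UNIV::'q set). \<Sum>j\<in>(UNIV::'q set). r^k)"
    by (intro sum_mono e)
  finally show ?thesis by simp
qed

lemma phi_series:
  fixes Us :: "'m::finite \<Rightarrow> real^'q::finite^'q"
  assumes bd: "\<And>v. norm (Umat Us \<tau> *v v) \<le> r * norm v" and r: "0 \<le> r" "r < pi"
  shows "(\<lambda>k. bcoef k * inner (((\<lambda>v. Umat Us \<tau> *v v) ^^ k) (cvec x)) (cvec x)) sums (phi Us x t \<tau> - 4 * (t \<bullet> \<tau>))"
proof -
  define U where "U = Umat Us \<tau>"
  define K where "K = real (CARD('q) * CARD('q))"
  have sm: "summable (\<lambda>k. bcoef k *\<^sub>R mat_pow U k)"
  proof (rule summable_comparison_test')
    show "summable (\<lambda>k. K * (\<bar>bcoef k\<bar> * r^k))"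
      by (intro summable_mult bcoef_abs_summable r)
    show "norm (bcoef k *\<^sub>R mat_pow U k) \<le> K * (\<bar>bcoef k\<bar> * r^k)" for k
    proof -
      have "norm (bcoef k *\<^sub>R mat_pow U k) = \<bar>bcoef k\<bar> * norm (mat_pow U k)" by simp
      also have "\<dots> \<le> \<bar>bcoef k\<bar> * (K * r^k)"
        unfolding K_def by (intro mult_left_mono mat_pow_norm[OF bd[folded U_def] r(1)]) simp
      finally show ?thesis by (simp add: algebra_simps)
    qed
  qed
  have mx: "mat_xcotx U = (\<Sum>k. bcoef k *\<^sub>R mat_pow U k)"
    by (simp add: mat_xcotx_def xcotx_coeff)
  have s1: "(\<lambda>k. bcoef k *\<^sub>R mat_pow U k) sums mat_xcotx U"
    unfolding mx by (rule summable_sums[OF sm])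
  have s2: "(\<lambda>k. qf x (bcoef k *\<^sub>R mat_pow U k)) sums qf x (mat_xcotx U)"
    by (rule bounded_linear.sums[OF qf_bl s1])
  have e: "qf x (bcoef k *\<^sub>R mat_pow U k) = bcoef k * inner (((\<lambda>v. U *v v) ^^ k) (cvec x)) (cvec x)" for k
  proof -
    have "qf x (bcoef k *\<^sub>R mat_pow U k) = bcoef k * qf x (mat_pow U k)"
      by (simp add: linear_cmul[OF qf_linear])
    also have "qf x (mat_pow U k) = inner (((\<lambda>v. U *v v) ^^ k) (cvec x)) (cvec x)"
      by (simp add: qf_inner mat_pow_mv)
    finally show ?thesis .
  qed
  have "phi Us x t \<tau> = qf x (mat_xcotx U) + 4 * (t \<bullet> \<tau>)"
    by (simp add: phi_def qf_def U_def)
  with s2 e show ?thesis by (simp add: U_def)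
qed

lemma pow_inner_shift:
  fixes A :: "'v::real_inner \<Rightarrow> 'v"
  assumes sa: "\<And>v w. inner (A v) w = inner v (A w)"
  shows "inner ((A ^^ (j + m)) v) w = inner ((A ^^ m) v) ((A ^^ j) w)"
proof (induction j arbitrary: w)
  case 0 then show ?case by simp
next
  case (Suc j)
  have "inner ((A ^^ (Suc j + m)) v) w = inner (A ((A ^^ (j + m)) v)) w" by simp
  also have "\<dots> = inner ((A ^^ (j + m)) v) (A w)" by (rule sa)
  also have "\<dots> = inner ((A ^^ m) v) ((A ^^ j) (A w))" by (rule Suc.IH)
  also have "(A ^^ j) (A w) = (A ^^ Suc j) w" by (simp add: funpow_Suc_right del: funpow.simps)
  finally show ?case .
qed

lemma q_nonneg:
  fixes A :: "'v::real_inner \<Rightarrow> 'v"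
  assumes sa: "\<And>v w. inner (A v) w = inner v (A w)"
  shows "0 \<le> (1 + (-1)^k) * inner ((A ^^ k) v) v"
proof (cases "even k")
  case True
  then obtain j where k: "k = j + j" by (metis evenE mult_2)
  have "inner ((A ^^ k) v) v = inner ((A ^^ j) v) ((A ^^ j) v)"
    unfolding k by (rule pow_inner_shift[OF sa])
  then have "0 \<le> inner ((A ^^ k) v) v" by simp
  then show ?thesis using True by simp
next
  case False then show ?thesis by simp
qed

lemma neg_pow:
  fixes A :: "'v::real_vector \<Rightarrow> 'v"
  assumes "linear A"
  shows "((\<lambda>v. - A v) ^^ k) v = (-1)^k *\<^sub>R (A ^^ k) v"
proof (induction k)
  case 0 then show ?case by simp
next
  case (Suc k)
  have "((\<lambda>v. - A v) ^^ Suc k) v = - A ((-1)^k *\<^sub>R (A ^^ k) v)" by (simp add: Suc.IH)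
  also have "\<dots> = (-1)^Suc k *\<^sub>R (A ^^ Suc k) v" by (simp add: linear_cmul[OF assms])
  finally show ?case .
qed

definition Gt :: "('m::finite \<Rightarrow> real^'q::finite^'q) \<Rightarrow> real^'q \<Rightarrow> real^'m \<Rightarrow> nat \<Rightarrow> real" where
  "Gt Us x \<tau> n = cc n * (inner (res (\<lambda>v. Umat Us \<tau> *v v) (cc n) (cvec x)) (cvec x)
      + inner (res (\<lambda>v. - (Umat Us \<tau> *v v)) (cc n) (cvec x)) (cvec x)) - 2 * inner (cvec x) (cvec x)"

lemma decomp:
  fixes Us :: "'m::finite \<Rightarrow> real^'q::finite^'q"
  assumes skew: "\<And>j. transpose (Us j) = - Us j"
    and bd: "\<And>v. norm (Umat Us \<tau> *v v) \<le> r * norm v" and r: "0 \<le> r" "r < pi"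
  shows "summable (Gt Us x \<tau>)"
    and "phi Us x t \<tau> = 4 * (t \<bullet> \<tau>) + inner (cvec x) (cvec x) - (\<Sum>n. Gt Us x \<tau> n)"
proof -
  define L where "L = (\<lambda>v. Umat Us \<tau> *v v)"
  define X where "X = cvec x"
  define q where "q k = inner ((L ^^ k) X) X" for k
  have blL: "bounded_linear L" unfolding L_def by simp
  have linL: "linear L" using blL bounded_linear.linear by blast
  have blM: "bounded_linear (\<lambda>v. - L v)" using blL by (rule bounded_linear_minus)
  have sa: "inner (L v) w = inner v (L w)" for v w unfolding L_def by (rule Umat_selfadj[OF skew])
  have bdL: "norm (L v) \<le> r * norm v" for v unfolding L_def by (rule bd)
  have bdM: "norm (- L v) \<le> r * norm v" for v using bdL by simp
  have rc: "r < cc n" for n using r cc_ge[of n] by linarith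
  have ps: "(\<lambda>k. bcoef k * q k) sums (phi Us x t \<tau> - 4 * (t \<bullet> \<tau>))"
    unfolding q_def L_def X_def by (rule phi_series[OF bd r])
  define e where "e k n = (if k = 0 then 0 else (1 + (-1)^k) / cc n ^ k * q k)" for k n
  have enn: "0 \<le> e k n" for k n
  proof -
    have "0 \<le> (1 + (-1)^k) * q k" unfolding q_def by (rule q_nonneg[OF sa])
    then have "0 \<le> inverse (cc n ^ k) * ((1 + (-1)^k) * q k)"
      using cc_pos[of n] by simp
    then show ?thesis by (simp add: e_def divide_inverse mult_ac)
  qed
  have row: "(\<lambda>n. e k n) sums (if k = 0 then 0 else - bcoef k * q k)" for k
  proof (cases "k = 0")
    case True then show ?thesis by (simp add: e_def)
  next
    case False
    then have k: "1 \<le> k" by simp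
    have "(\<lambda>n. (1 + (-1)^k) / cc n ^ k * q k) sums ((\<Sum>n. (1 + (-1)^k) / cc n ^ k) * q k)"
      by (intro sums_mult2 summable_sums bsum_summable[OF k])
    then show ?thesis using False by (simp add: e_def bcoef_def)
  qed
  have rowsum: "(\<Sum>n. e k n) = (if k = 0 then 0 else - bcoef k * q k)" for k
    using row[of k] by (simp add: sums_iff)
  have pt: "(if k = 0 then 0 else - bcoef k * q k) = - (bcoef k * q k) + (if k = 0 then bcoef 0 * q 0 else 0)" for k
    by simp
  have rs: "(\<lambda>k. \<Sum>n. e k n) sums (- (phi Us x t \<tau> - 4 * (t \<bullet> \<tau>)) + bcoef 0 * q 0)"
    unfolding rowsum pt by (intro sums_add sums_minus ps) (rule sums_single)
  note sw = nonneg_swap[of e, OF enn sums_summable[OF row] sums_summable[OF rs]]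
  have col: "(\<lambda>k. e k n) sums Gt Us x \<tau> n" for n
  proof -
    define c where "c = cc n"
    have c: "0 < c" using cc_pos by (simp add: c_def)
    have s1: "(\<lambda>k. inverse c ^ Suc k * inner ((L ^^ k) X) X) sums inner (res L c X) X"
      using res_props(3)[OF blL bdL r(1) rc[of n]] by (simp add: c_def)
    have s2: "(\<lambda>k. inverse c ^ Suc k * inner (((\<lambda>v. - L v) ^^ k) X) X) sums inner (res (\<lambda>v. - L v) c X) X"
      using res_props(3)[OF blM bdM r(1) rc[of n]] by (simp add: c_def)
    have s3: "(\<lambda>k. c * (inverse c ^ Suc k * q k + inverse c ^ Suc k * ((-1)^k * q k)) - (if k = 0 then 2 * q 0 else 0))
        sums (c * (inner (res L c X) X + inner (res (\<lambda>v. - L v) c X) X) - 2 * q 0)"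
    proof (intro sums_diff sums_mult sums_add)
      show "(\<lambda>k. inverse c ^ Suc k * q k) sums inner (res L c X) X" using s1 by (simp add: q_def)
      show "(\<lambda>k. inverse c ^ Suc k * ((-1)^k * q k)) sums inner (res (\<lambda>v. - L v) c X) X"
        using s2 by (simp add: q_def neg_pow[OF linL])
      show "(\<lambda>k. if k = 0 then 2 * q 0 else 0) sums (2 * q 0)" by (rule sums_single)
    qed
    have eq: "c * (inverse c ^ Suc k * q k + inverse c ^ Suc k * ((-1)^k * q k)) - (if k = 0 then 2 * q 0 else 0) = e k n" for k
      using c by (cases "k = 0") (simp_all add: e_def c_def field_simps)
    have "q 0 = inner X X" by (simp add: q_def)
    then show ?thesis using s3 unfolding eq
      by (simp add: Gt_def c_def L_def X_def)
  qed
  have colsum: "(\<Sum>k. e k n) = Gt Us x \<tau> n" for n using col[of n] by (simp add: sums_iff)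
  show "summable (Gt Us x \<tau>)" using sw(2) by (simp add: colsum)
  have "(\<Sum>k. \<Sum>n. e k n) = - (phi Us x t \<tau> - 4 * (t \<bullet> \<tau>)) + bcoef 0 * q 0"
    using rs by (simp add: sums_iff)
  moreover have "(\<Sum>k. \<Sum>n. e k n) = (\<Sum>n. Gt Us x \<tau> n)" using sw(3) by (simp add: colsum)
  moreover have "bcoef 0 * q 0 = inner (cvec x) (cvec x)" by (simp add: bcoef_def q_def X_def)
  ultimately show "phi Us x t \<tau> = 4 * (t \<bullet> \<tau>) + inner (cvec x) (cvec x) - (\<Sum>n. Gt Us x \<tau> n)"
    by simp
qed

lemma cvec_nz: "x \<noteq> 0 \<Longrightarrow> cvec x \<noteq> 0"
  by (auto simp: cvec_def vec_eq_iff)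

lemma bl_minus_linear: "linear (\<lambda>v. - (Umat Us a *v v))"
  using bounded_linear_minus[OF matrix_vector_mul_bounded_linear[of "Umat Us a"]] bounded_linear.linear by blast

theorem proposition9p1:
  fixes Us :: "'m::finite \<Rightarrow> real^'q::finite^'q"
    and x :: "real^'q" and t :: "real^'m"
  assumes skew: "\<And>j. transpose (Us j) = - Us j"
    and indep: "\<And>c::'m \<Rightarrow> real. (\<Sum>j\<in>UNIV. c j *\<^sub>R Us j) = 0 \<Longrightarrow> (\<forall>j. c j = 0)"
    and met: "metivier Us"
    and x_nz: "x \<noteq> 0"
  shows "\<exists>C>0. \<forall>s a b. 0 \<le> s \<and> s \<le> 1 \<and> a \<in> Omega_star Us \<and> b \<in> Omega_star Us \<longrightarrow>
           phi Us x t (s *\<^sub>R a + (1 - s) *\<^sub>R b)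
             \<ge> s * phi Us x t a + (1 - s) * phi Us x t b + C * s * (1 - s) * (norm (a - b))\<^sup>2"
proof -
  obtain \<sigma> where sg: "\<sigma> > 0" and sgb: "\<And>h v. \<sigma> * norm h * norm v \<le> norm (Umat Us h *v (v::complex^'q))"
    using sigma_exists[OF met] by blast
  define X where "X = cvec x"
  have Xn: "norm X > 0" using cvec_nz[OF x_nz] by (simp add: X_def)
  define C where "C = \<sigma>^2 * norm X ^ 2 / (8 * pi^2)"
  have Cpos: "C > 0" using sg Xn pi_gt_zero by (simp add: C_def)
  have main: "phi Us x t (s *\<^sub>R a + (1 - s) *\<^sub>R b)
             \<ge> s * phi Us x t a + (1 - s) * phi Us x t b + C * s * (1 - s) * (norm (a - b))\<^sup>2"
    if s: "0 \<le> s" "s \<le> 1" and aO: "a \<in> Omega_star Us" and bO: "b \<in> Omega_star Us" for s a b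
  proof -
    define m where "m = s *\<^sub>R a + (1 - s) *\<^sub>R b"
    define ra where "ra = onorm (\<lambda>v. Umat Us a *v (v::complex^'q))"
    define rb where "rb = onorm (\<lambda>v. Umat Us b *v (v::complex^'q))"
    have ra: "0 \<le> ra" "ra < pi" using aO onorm_pos_le[OF matrix_vector_mul_bounded_linear]
      by (auto simp: ra_def Omega_star_def)
    have rb: "0 \<le> rb" "rb < pi" using bO onorm_pos_le[OF matrix_vector_mul_bounded_linear]
      by (auto simp: rb_def Omega_star_def)
    have bda: "norm (Umat Us a *v v) \<le> ra * norm v" for v
      unfolding ra_def by (rule onorm[OF matrix_vector_mul_bounded_linear])
    have bdb: "norm (Umat Us b *v v) \<le> rb * norm v" for v
      unfolding rb_def by (rule onorm[OF matrix_vector_mul_bounded_linear])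
    define rm where "rm = s * ra + (1 - s) * rb"
    have Lm: "Umat Us m *v v = s *\<^sub>R (Umat Us a *v v) + (1 - s) *\<^sub>R (Umat Us b *v v)" for v
      unfolding m_def by (rule Umat_lin)
    have bdm: "norm (Umat Us m *v v) \<le> rm * norm v" for v
    proof -
      have "norm (Umat Us m *v v) \<le> norm (s *\<^sub>R (Umat Us a *v v)) + norm ((1 - s) *\<^sub>R (Umat Us b *v v))"
        unfolding Lm by (rule norm_triangle_ineq)
      also have "\<dots> = s * norm (Umat Us a *v v) + (1 - s) * norm (Umat Us b *v v)" using s by simp
      also have "\<dots> \<le> s * (ra * norm v) + (1 - s) * (rb * norm v)"
        using s by (intro add_mono mult_left_mono bda bdb) auto
      finally show ?thesis by (simp add: rm_def algebra_simps)
    qed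
    have rm: "0 \<le> rm" "rm < pi"
    proof -
      show "0 \<le> rm" using s ra rb by (simp add: rm_def)
      have "rm \<le> s * max ra rb + (1 - s) * max ra rb"
        unfolding rm_def using s by (intro add_mono mult_left_mono) auto
      moreover have "s * max ra rb + (1 - s) * max ra rb = max ra rb" by (simp add: algebra_simps)
      moreover have "max ra rb < pi" using ra rb by simp
      ultimately show "rm < pi" by linarith
    qed
    note da = decomp[OF skew bda ra]
    note db = decomp[OF skew bdb rb]
    note dm = decomp[OF skew bdm rm]
    define gap where "gap n = s * Gt Us x a n + (1 - s) * Gt Us x b n - Gt Us x m n" for n
    have gs: "gap sums (s * (\<Sum>n. Gt Us x a n) + (1 - s) * (\<Sum>n. Gt Us x b n) - (\<Sum>n. Gt Us x m n))"
      unfolding gap_def[abs_def]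
      by (intro sums_diff sums_add sums_mult summable_sums da(1) db(1) dm(1))
    have tm: "t \<bullet> m = s * (t \<bullet> a) + (1 - s) * (t \<bullet> b)"
      by (simp add: m_def inner_add_right)
    have phieq: "phi Us x t m - (s * phi Us x t a + (1 - s) * phi Us x t b) = (\<Sum>n. gap n)"
    proof -
      have ea: "phi Us x t a = 4 * (t \<bullet> a) + inner (cvec x) (cvec x) - (\<Sum>n. Gt Us x a n)" by (rule da(2))
      have eb: "phi Us x t b = 4 * (t \<bullet> b) + inner (cvec x) (cvec x) - (\<Sum>n. Gt Us x b n)" by (rule db(2))
      have em: "phi Us x t m = 4 * (t \<bullet> m) + inner (cvec x) (cvec x) - (\<Sum>n. Gt Us x m n)" by (rule dm(2))
      have eg: "(\<Sum>n. gap n) = s * (\<Sum>n. Gt Us x a n) + (1 - s) * (\<Sum>n. Gt Us x b n) - (\<Sum>n. Gt Us x m n)"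
        using gs by (simp add: sums_iff)
      show ?thesis unfolding ea eb em eg tm by (simp add: algebra_simps)
    qed
    define y where "y n = res (\<lambda>v. Umat Us m *v v) (cc n) X" for n
    have gapn: "cc n * (s * (1 - s) * norm (Umat Us a *v y n - Umat Us b *v y n)^2 / (2 * cc n)) \<le> gap n" for n
    proof -
      define c where "c = cc n"
      have c: "0 < c" "pi \<le> c" using cc_pos cc_ge by (auto simp: c_def)
      have bla: "bounded_linear (\<lambda>v. Umat Us a *v (v::complex^'q))" by simp
      have blb: "bounded_linear (\<lambda>v. Umat Us b *v (v::complex^'q))" by simp
      have blm: "bounded_linear (\<lambda>v. Umat Us m *v (v::complex^'q))" by simp
      have bla': "bounded_linear (\<lambda>v. - (Umat Us a *v (v::complex^'q)))" by (rule bounded_linear_minus[OF bla])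
      have blb': "bounded_linear (\<lambda>v. - (Umat Us b *v (v::complex^'q)))" by (rule bounded_linear_minus[OF blb])
      have blm': "bounded_linear (\<lambda>v. - (Umat Us m *v (v::complex^'q)))" by (rule bounded_linear_minus[OF blm])
      have rac: "ra < c" "rb < c" "rm < c" using ra rb rm c by linarith+
      have ca: "norm (Umat Us a *v v) \<le> c * norm v" for v
        using bda[of v] rac(1) by (meson less_imp_le mult_right_mono norm_ge_zero order_trans)
      have cb: "norm (Umat Us b *v v) \<le> c * norm v" for v
        using bdb[of v] rac(2) by (meson less_imp_le mult_right_mono norm_ge_zero order_trans)
      have sa: "inner (Umat Us a *v v) w = inner v (Umat Us a *v w)" for v w by (rule Umat_selfadj[OF skew])
      have sb: "inner (Umat Us b *v v) w = inner v (Umat Us b *v w)" for v w by (rule Umat_selfadj[OF skew])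
      have sa': "inner (- (Umat Us a *v v)) w = inner v (- (Umat Us a *v w))" for v w using sa by simp
      have sb': "inner (- (Umat Us b *v v)) w = inner v (- (Umat Us b *v w))" for v w using sb by simp
      have ya: "c *\<^sub>R res (\<lambda>v. Umat Us a *v v) c X - Umat Us a *v res (\<lambda>v. Umat Us a *v v) c X = X"
        using res_props(2)[OF bla bda ra(1) rac(1)] .
      have yb: "c *\<^sub>R res (\<lambda>v. Umat Us b *v v) c X - Umat Us b *v res (\<lambda>v. Umat Us b *v v) c X = X"
        using res_props(2)[OF blb bdb rb(1) rac(2)] .
      have ym0: "c *\<^sub>R y n - Umat Us m *v y n = X"
        using res_props(2)[OF blm bdm rm(1) rac(3)] by (simp add: y_def c_def)
      have ym: "c *\<^sub>R y n - (s *\<^sub>R (Umat Us a *v y n) + (1 - s) *\<^sub>R (Umat Us b *v y n)) = X"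
        using ym0 by (simp add: Lm)
      have ya': "c *\<^sub>R res (\<lambda>v. - (Umat Us a *v v)) c X - - (Umat Us a *v res (\<lambda>v. - (Umat Us a *v v)) c X) = X"
        using res_props(2)[OF bla' _ ra(1) rac(1)] bda by simp
      have yb': "c *\<^sub>R res (\<lambda>v. - (Umat Us b *v v)) c X - - (Umat Us b *v res (\<lambda>v. - (Umat Us b *v v)) c X) = X"
        using res_props(2)[OF blb' _ rb(1) rac(2)] bdb by simp
      have ym0': "c *\<^sub>R res (\<lambda>v. - (Umat Us m *v v)) c X - - (Umat Us m *v res (\<lambda>v. - (Umat Us m *v v)) c X) = X"
        using res_props(2)[OF blm' _ rm(1) rac(3)] bdm by simp
      have ym': "c *\<^sub>R res (\<lambda>v. - (Umat Us m *v v)) c X - (s *\<^sub>R (- (Umat Us a *v res (\<lambda>v. - (Umat Us m *v v)) c X))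
          + (1 - s) *\<^sub>R (- (Umat Us b *v res (\<lambda>v. - (Umat Us m *v v)) c X))) = X"
        using ym0' by (simp add: Lm algebra_simps)
      have g1: "s * (1 - s) * norm (Umat Us a *v y n - Umat Us b *v y n)^2 / (2 * c)
          \<le> s * inner (res (\<lambda>v. Umat Us a *v v) c X) X + (1 - s) * inner (res (\<lambda>v. Umat Us b *v v) c X) X - inner (y n) X"
        by (rule gap_lemma[OF Umat_linear Umat_linear sa sb ca cb c(1) s ya yb ym])
      have g2: "s * (1 - s) * norm (- (Umat Us a *v res (\<lambda>v. - (Umat Us m *v v)) c X) - - (Umat Us b *v res (\<lambda>v. - (Umat Us m *v v)) c X))^2 / (2 * c)
          \<le> s * inner (res (\<lambda>v. - (Umat Us a *v v)) c X) X + (1 - s) * inner (res (\<lambda>v. - (Umat Us b *v v)) c X) X - inner (res (\<lambda>v. - (Umat Us m *v v)) c X) X"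
        by (rule gap_lemma[OF bl_minus_linear bl_minus_linear sa' sb' _ _ c(1) s ya' yb' ym']) (use ca cb in simp_all)
      have g2': "0 \<le> s * inner (res (\<lambda>v. - (Umat Us a *v v)) c X) X + (1 - s) * inner (res (\<lambda>v. - (Umat Us b *v v)) c X) X - inner (res (\<lambda>v. - (Umat Us m *v v)) c X) X"
        by (rule order_trans[OF _ g2]) (use s c in simp)
      have "gap n = c * ((s * inner (res (\<lambda>v. Umat Us a *v v) c X) X + (1 - s) * inner (res (\<lambda>v. Umat Us b *v v) c X) X - inner (y n) X)
          + (s * inner (res (\<lambda>v. - (Umat Us a *v v)) c X) X + (1 - s) * inner (res (\<lambda>v. - (Umat Us b *v v)) c X) X - inner (res (\<lambda>v. - (Umat Us m *v v)) c X) X))"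
        by (simp add: gap_def Gt_def c_def y_def X_def algebra_simps)
      moreover have "c * (s * (1 - s) * norm (Umat Us a *v y n - Umat Us b *v y n)^2 / (2 * c)) \<le> c * ((s * inner (res (\<lambda>v. Umat Us a *v v) c X) X + (1 - s) * inner (res (\<lambda>v. Umat Us b *v v) c X) X - inner (y n) X)
          + (s * inner (res (\<lambda>v. - (Umat Us a *v v)) c X) X + (1 - s) * inner (res (\<lambda>v. - (Umat Us b *v v)) c X) X - inner (res (\<lambda>v. - (Umat Us m *v v)) c X) X))"
        using g1 g2' c by (intro mult_left_mono) auto
      ultimately show ?thesis by (simp add: c_def)
    qed
    have gapnn: "0 \<le> gap n" for n
      by (rule order_trans[OF _ gapn[of n]]) (use s cc_pos[of n] in simp)
    have sumge: "gap 0 \<le> (\<Sum>n. gap n)"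
      using sum_le_suminf[OF sums_summable[OF gs], of "{0}"] gapnn by simp
    have y0: "pi *\<^sub>R y 0 - Umat Us m *v y 0 = X"
      using res_props(2)[OF matrix_vector_mul_bounded_linear bdm rm] by (simp add: y_def cc_def)
    have ny: "norm X \<le> 2 * pi * norm (y 0)"
    proof -
      have "norm X \<le> norm (pi *\<^sub>R y 0) + norm (Umat Us m *v y 0)"
        unfolding y0[symmetric] by (rule norm_triangle_ineq4)
      also have "\<dots> \<le> pi * norm (y 0) + rm * norm (y 0)" using bdm[of "y 0"] pi_gt_zero by simp
      also have "\<dots> \<le> 2 * pi * norm (y 0)" using rm by (simp add: mult_right_mono algebra_simps)
      finally show ?thesis .
    qed
    have D: "Umat Us a *v y 0 - Umat Us b *v y 0 = Umat Us (a - b) *v y 0" by (simp add: Umat_diff)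
    have lb: "\<sigma> * norm (a - b) * (norm X / (2 * pi)) \<le> norm (Umat Us a *v y 0 - Umat Us b *v y 0)"
    proof -
      have "\<sigma> * norm (a - b) * (norm X / (2 * pi)) \<le> \<sigma> * norm (a - b) * norm (y 0)"
        using ny sg pi_gt_zero by (intro mult_left_mono) (auto simp: field_simps)
      also have "\<dots> \<le> norm (Umat Us a *v y 0 - Umat Us b *v y 0)" unfolding D by (rule sgb)
      finally show ?thesis .
    qed
    have lb2: "(\<sigma> * norm (a - b) * (norm X / (2 * pi)))^2 \<le> norm (Umat Us a *v y 0 - Umat Us b *v y 0)^2"
      using lb sg Xn pi_gt_zero by (intro power_mono) auto
    have "C * s * (1 - s) * (norm (a - b))\<^sup>2 = s * (1 - s) * (\<sigma> * norm (a - b) * (norm X / (2 * pi)))^2 / 2"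
      by (simp add: C_def power_mult_distrib power_divide field_simps)
    also have "\<dots> \<le> s * (1 - s) * norm (Umat Us a *v y 0 - Umat Us b *v y 0)^2 / 2"
      using s lb2 by (intro divide_right_mono mult_left_mono) auto
    also have "\<dots> = cc 0 * (s * (1 - s) * norm (Umat Us a *v y 0 - Umat Us b *v y 0)^2 / (2 * cc 0))"
      using cc_pos[of 0] by (simp add: field_simps)
    also have "\<dots> \<le> gap 0" by (rule gapn)
    also have "\<dots> \<le> (\<Sum>n. gap n)" by (rule sumge)
    finally show ?thesis using phieq by (simp add: m_def)
  qed
  show ?thesis using Cpos main by blast
qed

end
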